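(* For all integers $p\ge1$ and $q\ge3$, $\chi_s(UC_q\,\square\,BC_{2p+1})>4$.
   Context: A signed graph $(G,\sigma)$ is a simple loopless undirected graph with a signature $\sigma:E(G)\to\{+1,-1\}$. Switching a vertex negates the signs of its incident edges; two signatures are equivalent if one is obtained from the other by switching a set of vertices. A homomorphism of $(G,\sigma)$ to $(H,\pi)$ is a graph homomorphism $\varphi:G\to H$ for which there is a signature $\sigma'$ equivalent to $\sigma$ with $\pi(\varphi(u)\varphi(v))=\sigma'(uv)$ for every edge $uv$; $\chi_s(G,\sigma)$ is the smallest order of a signed graph to which $(G,\sigma)$ admits a homomorphism. $UC_k$ (resp. $BC_k$) denotes a cycle on $k$ vertices with an odd (resp. even) number of negative edges (well defined up to equivalence). The Cartesian product $(G,\sigma)\,\square\,(H,\pi)$ is the signed graph on $G\,\square\,H$ where $(u,v_1)(u,v_2)$ has sign $\pi(v_1v_2)$ and $(u_1,v)(u_2,v)$ has sign $\sigma(u_1u_2)$. *)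

theory Defs
  imports Main
begin

text \<open>A signed graph is given by a vertex set V, a set E of edges (2-element subsets
of V) and a signature sigma on edges, where sigma e = True means that e is negative.\<close>

definition signed_graph :: "'a set \<Rightarrow> 'a set set \<Rightarrow> ('a set \<Rightarrow> bool) \<Rightarrow> bool" where
  "signed_graph V E sigma \<longleftrightarrow> finite V \<and>
     (\<forall>e\<in>E. \<exists>u v. u \<in> V \<and> v \<in> V \<and> u \<noteq> v \<and> e = {u, v})"

definition signed_hom ::
  "'a set \<Rightarrow> 'a set set \<Rightarrow> ('a set \<Rightarrow> bool) \<Rightarrow>
   'b set \<Rightarrow> 'b set set \<Rightarrow> ('b set \<Rightarrow> bool) \<Rightarrow> ('a \<Rightarrow> 'b) \<Rightarrow> bool" where
  "signed_hom V E sigma W F pi phi \<longleftrightarrow>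
     (\<forall>v\<in>V. phi v \<in> W) \<and>
     (\<exists>X\<subseteq>V. \<forall>u v. {u, v} \<in> E \<longrightarrow>
        {phi u, phi v} \<in> F \<and>
        pi {phi u, phi v} = (sigma {u, v} \<noteq> ((u \<in> X) \<noteq> (v \<in> X))))"

text \<open>Signed chromatic number: least order of a signed graph (vertices taken, without loss
of generality, among the naturals) to which the given signed graph maps.\<close>

definition signed_chi :: "'a set \<Rightarrow> 'a set set \<Rightarrow> ('a set \<Rightarrow> bool) \<Rightarrow> nat" where
  "signed_chi V E sigma = (LEAST k. \<exists>(W::nat set) F pi phi.
      signed_graph W F pi \<and> card W = k \<and> signed_hom V E sigma W F pi phi)"

definition cyc_V :: "nat \<Rightarrow> nat set" where
  "cyc_V k = {..<k}"

definition cyc_E :: "nat \<Rightarrow> nat set set" where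
  "cyc_E k = {{i, Suc i mod k} | i. i < k}"

text \<open>UC_k: one negative edge {0,1} (odd number); BC_k: all edges positive (even number).\<close>

definition UC_sig :: "nat set \<Rightarrow> bool" where
  "UC_sig e \<longleftrightarrow> e = {0, 1}"

definition BC_sig :: "nat set \<Rightarrow> bool" where
  "BC_sig e \<longleftrightarrow> False"

definition prod_V :: "'a set \<Rightarrow> 'b set \<Rightarrow> ('a \<times> 'b) set" where
  "prod_V V1 V2 = V1 \<times> V2"

definition prod_E :: "'a set \<Rightarrow> 'a set set \<Rightarrow> 'b set \<Rightarrow> 'b set set \<Rightarrow> ('a \<times> 'b) set set" where
  "prod_E V1 E1 V2 E2 =
     {{(u, v1), (u, v2)} | u v1 v2. u \<in> V1 \<and> {v1, v2} \<in> E2} \<union>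
     {{(u1, v), (u2, v)} | u1 u2 v. v \<in> V2 \<and> {u1, u2} \<in> E1}"

definition prod_sig :: "('a set \<Rightarrow> bool) \<Rightarrow> ('b set \<Rightarrow> bool) \<Rightarrow> ('a \<times> 'b) set \<Rightarrow> bool" where
  "prod_sig sigma pi e = (if card (fst ` e) = 1 then pi (snd ` e) else sigma (fst ` e))"

end

theory Submission
  imports Defs
begin


lemma cyc_contra:
  fixes f :: "nat \<Rightarrow> bool"
  assumes q2: "q \<ge> 2" and H: "\<forall>u<q. (f u \<noteq> f (Suc u mod q)) = (u = 0)"
  shows False
proof -
  have f01: "f 0 \<noteq> f 1" using H[rule_format, of 0] q2 by auto
  have key: "1 \<le> u \<longrightarrow> u < q \<longrightarrow> f u = f 1" for u
  proof (induction u)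
    case 0 then show ?case by simp
  next
    case (Suc u)
    show ?case
    proof (intro impI)
      assume a: "1 \<le> Suc u" "Suc u < q"
      show "f (Suc u) = f 1"
      proof (cases "u = 0")
        case True then show ?thesis by simp
      next
        case False
        with Suc.IH a have "f u = f 1" by simp
        moreover have "(f u \<noteq> f (Suc u mod q)) = (u=0)" using H[rule_format, of u] a by linarith
        moreover have "Suc u mod q = Suc u" using a by simp
        ultimately show ?thesis using False by simp
      qed
    qed
  qed
  have "f (q-1) = f 1" using key[of "q-1"] q2 by simp
  moreover have lt: "q-1 < q" using q2 by simp
  have e: "Suc (q-1) mod q = 0" using q2 by simp
  have "(f (q-1) \<noteq> f (Suc (q-1) mod q)) = (q-1 = 0)" using H[rule_format, OF lt] .
  then have "(f (q-1) \<noteq> f 0) = (q-1 = 0)" unfolding e .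
  moreover have "q - 1 \<noteq> 0" using q2 by simp
  ultimately have "f 0 = f 1" by metis
  then show False using f01 by contradiction
qed

lemma odd_cycle_alt:
  fixes y :: "nat \<Rightarrow> bool"
  assumes n: "n = 2*p+1" and "p \<ge> 1" and H: "\<forall>v<n. y v \<noteq> y (Suc v mod n)"
  shows False
proof -
  have key: "v < n \<longrightarrow> y v = (y 0 \<noteq> odd v)" for v
  proof (induction v)
    case 0 then show ?case by simp
  next
    case (Suc v)
    show ?case
    proof
      assume a: "Suc v < n"
      then have "y v \<noteq> y (Suc v)" using H[rule_format, of v] by simp
      then show "y (Suc v) = (y 0 \<noteq> odd (Suc v))" using Suc.IH a by auto
    qed
  qed
  have a: "y (2*p) = y 0" using key[of "2*p"] n by simp
  have lt: "2*p < n" using n by simp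
  have b: "y (2*p) \<noteq> y (Suc (2*p) mod n)" using H[rule_format, OF lt] .
  have c: "Suc (2*p) mod n = 0" using n by simp
  from b have "y (2*p) \<noteq> y 0" unfolding c .
  with a show False by contradiction
qed

lemma square:
  assumes "a\<noteq>b" "\<alpha>1\<noteq>\<alpha>2" "\<beta>1\<noteq>\<beta>2" "\<alpha>1\<noteq>\<beta>1" "\<alpha>2\<noteq>\<beta>2"
   "({\<alpha>1,\<alpha>2}={a,b}) = (s1\<noteq>s2)" "({\<beta>1,\<beta>2}={a,b}) = (t1\<noteq>t2)"
   "({\<alpha>1,\<beta>1}={a,b}) = (\<sigma>\<noteq>(s1\<noteq>t1))" "({\<alpha>2,\<beta>2}={a,b}) = (\<sigma>\<noteq>(s2\<noteq>t2))"
  shows "((((s1 \<noteq> (\<alpha>1 = b \<and> \<alpha>2 = a)) \<noteq> (t1 \<noteq> (\<beta>1 = b \<and> \<beta>2 = a))) \<noteq> ((s1 \<noteq> (\<alpha>1 = b \<and> \<beta>1 = a)) \<noteq> (s2 \<noteq> (\<alpha>2 = b \<and> \<beta>2 = a))))) = \<sigma>"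
  using assms unfolding doubleton_eq_iff
  by (cases "\<alpha>1 = a"; cases "\<alpha>1 = b"; cases "\<alpha>2 = a"; cases "\<alpha>2 = b"; cases "\<beta>1 = a"; cases "\<beta>1 = b"; cases "\<beta>2 = a"; cases "\<beta>2 = b"; simp; blast?)

lemma sum_shift_mod:
  assumes "n > 0"
  shows "(\<Sum>v<n. h (Suc v mod n)) = (\<Sum>v<n. (h v :: nat))"
proof -
  obtain m where m: "n = Suc m" using assms by (cases n) auto
  have "(\<Sum>v<Suc m. h (Suc v mod Suc m)) = (\<Sum>v<m. h (Suc v mod Suc m)) + h (Suc m mod Suc m)"
    by simp
  also have "(\<Sum>v<m. h (Suc v mod Suc m)) = (\<Sum>v<m. h (Suc v))"
    by (rule sum.cong) auto
  also have "(\<Sum>v<m. h (Suc v)) + h (Suc m mod Suc m) = (\<Sum>v<Suc m. h v)"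
    by (subst sum.lessThan_Suc_shift) simp
  finally show ?thesis using m by simp
qed

lemma parity5:
  "even (of_bool a + of_bool b + of_bool c + of_bool d + of_bool e :: nat) = (((a\<noteq>b)\<noteq>(c\<noteq>d)) = e)"
  by (cases a; cases b; cases c; cases d; cases e; simp)

definition form4 :: "(nat \<Rightarrow> nat \<Rightarrow> bool) \<Rightarrow> bool" where
  "form4 Q = ((\<forall>\<alpha><4. \<forall>\<beta><4. \<alpha>\<noteq>\<beta> \<longrightarrow> \<not> Q \<alpha> \<beta>) \<or> (\<forall>\<alpha><4. \<forall>\<beta><4. \<alpha>\<noteq>\<beta> \<longrightarrow> Q \<alpha> \<beta>) \<or>
     (\<exists>a b. a\<noteq>b \<and> (\<forall>\<alpha><4. \<forall>\<beta><4. \<alpha>\<noteq>\<beta> \<longrightarrow> Q \<alpha> \<beta> = ({\<alpha>,\<beta>}={a,b}))))"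

lemma core:
  fixes c :: "nat \<Rightarrow> nat \<Rightarrow> nat" and x :: "nat \<Rightarrow> nat \<Rightarrow> bool" and Q :: "nat \<Rightarrow> nat \<Rightarrow> bool"
  assumes n: "n = 2*p+1" and p: "p \<ge> 1" and q: "q \<ge> 3"
  and cb: "\<forall>u<q. \<forall>v<n. c u v < 4"
  and R1: "\<forall>u<q. \<forall>v<n. c u v \<noteq> c u (Suc v mod n) \<and> Q (c u v) (c u (Suc v mod n)) = (x u v \<noteq> x u (Suc v mod n))"
  and R2: "\<forall>u<q. \<forall>v<n. c u v \<noteq> c (Suc u mod q) v \<and> Q (c u v) (c (Suc u mod q) v) = ((u=0) \<noteq> (x u v \<noteq> x (Suc u mod q) v))"
  and form: "form4 Q"
  shows False
  using form unfolding form4_def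
proof (elim disjE exE conjE)
  assume A: "\<forall>\<alpha><4. \<forall>\<beta><4. \<alpha>\<noteq>\<beta> \<longrightarrow> \<not> Q \<alpha> \<beta>"
  have n0: "0 < n" using n by simp
  show False
  proof (rule cyc_contra[of q "\<lambda>u. x u 0"])
    show "q \<ge> 2" using q by simp
    show "\<forall>u<q. (x u 0 \<noteq> x (Suc u mod q) 0) = (u = 0)"
    proof (intro allI impI)
      fix u assume u: "u<q"
      have u': "Suc u mod q < q" using q by simp
      have r: "c u 0 \<noteq> c (Suc u mod q) 0 \<and> Q (c u 0) (c (Suc u mod q) 0) = ((u=0) \<noteq> (x u 0 \<noteq> x (Suc u mod q) 0))"
        using R2 u n0 by blast
      have "c u 0 < 4" "c (Suc u mod q) 0 < 4" using cb u u' n0 by auto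
      then have "\<not> Q (c u 0) (c (Suc u mod q) 0)" using A r by blast
      then show "(x u 0 \<noteq> x (Suc u mod q) 0) = (u = 0)" using r by auto
    qed
  qed
next
  assume B: "\<forall>\<alpha><4. \<forall>\<beta><4. \<alpha>\<noteq>\<beta> \<longrightarrow> Q \<alpha> \<beta>"
  show False
  proof (rule odd_cycle_alt[OF n p, of "x 0"])
    show "\<forall>v<n. x 0 v \<noteq> x 0 (Suc v mod n)"
    proof (intro allI impI)
      fix v assume v: "v<n"
      have v': "Suc v mod n < n" using n by simp
      have q0: "0 < q" using q by simp
      have r: "c 0 v \<noteq> c 0 (Suc v mod n) \<and> Q (c 0 v) (c 0 (Suc v mod n)) = (x 0 v \<noteq> x 0 (Suc v mod n))"
        using R1 v q0 by blast
      have "c 0 v < 4" "c 0 (Suc v mod n) < 4" using cb v v' q0 by auto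
      then have "Q (c 0 v) (c 0 (Suc v mod n))" using B r by blast
      then show "x 0 v \<noteq> x 0 (Suc v mod n)" using r by auto
    qed
  qed
next
  fix a b assume ab: "a\<noteq>b" and C: "\<forall>\<alpha><4. \<forall>\<beta><4. \<alpha>\<noteq>\<beta> \<longrightarrow> Q \<alpha> \<beta> = ({\<alpha>,\<beta>}={a,b})"
  define A where "A u v = ((x u v) \<noteq> (c u v = b \<and> c u (Suc v mod n) = a))" for u v
  define S where "S u = (\<Sum>v<n. of_bool (A u v) :: nat)" for u
  have step: "(even (S u) \<noteq> even (S (Suc u mod q))) = (u=0)" if u: "u<q" for u
  proof -
    define u' where "u' = Suc u mod q"
    define \<sigma> where "\<sigma> = (u = 0)"
    have u': "u' < q" using q by (simp add: u'_def)
    define r where "r v = (x u v \<noteq> (c u v = b \<and> c u' v = a))" for v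
    have T: "even (of_bool (A u v) + of_bool (A u' v) + of_bool (r v) + of_bool (r (Suc v mod n)) + of_bool \<sigma> :: nat)"
      if v: "v<n" for v
    proof -
      define v' where "v' = Suc v mod n"
      have v': "v' < n" using n by (simp add: v'_def)
      have e1: "c u v \<noteq> c u v' \<and> Q (c u v) (c u v') = (x u v \<noteq> x u v')"
        using R1[rule_format, OF u v] unfolding v'_def .
      have e2: "c u' v \<noteq> c u' v' \<and> Q (c u' v) (c u' v') = (x u' v \<noteq> x u' v')"
        using R1[rule_format, OF u' v] unfolding v'_def .
      have e3: "c u v \<noteq> c u' v \<and> Q (c u v) (c u' v) = (\<sigma> \<noteq> (x u v \<noteq> x u' v))"
        using R2[rule_format, OF u v] unfolding u'_def \<sigma>_def .
      have e4: "c u v' \<noteq> c u' v' \<and> Q (c u v') (c u' v') = (\<sigma> \<noteq> (x u v' \<noteq> x u' v'))"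
        using R2[rule_format, OF u v'] unfolding u'_def \<sigma>_def .
      have b1: "c u v < 4" "c u v' < 4" "c u' v < 4" "c u' v' < 4"
        using cb[rule_format, OF u v] cb[rule_format, OF u v'] cb[rule_format, OF u' v] cb[rule_format, OF u' v'] by auto
      have f1: "({c u v, c u v'} = {a,b}) = (x u v \<noteq> x u v')"
        using C[rule_format, OF b1(1) b1(2) conjunct1[OF e1]] conjunct2[OF e1] by simp
      have f2: "({c u' v, c u' v'} = {a,b}) = (x u' v \<noteq> x u' v')"
        using C[rule_format, OF b1(3) b1(4) conjunct1[OF e2]] conjunct2[OF e2] by simp
      have f3: "({c u v, c u' v} = {a,b}) = (\<sigma> \<noteq> (x u v \<noteq> x u' v))"
        using C[rule_format, OF b1(1) b1(3) conjunct1[OF e3]] conjunct2[OF e3] by simp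
      have f4: "({c u v', c u' v'} = {a,b}) = (\<sigma> \<noteq> (x u v' \<noteq> x u' v'))"
        using C[rule_format, OF b1(2) b1(4) conjunct1[OF e4]] conjunct2[OF e4] by simp
      have sq: "((A u v \<noteq> A u' v) \<noteq> (r v \<noteq> r v')) = \<sigma>"
        unfolding A_def r_def v'_def[symmetric]
        by (rule square[OF ab conjunct1[OF e1] conjunct1[OF e2] conjunct1[OF e3] conjunct1[OF e4] f1 f2 f3 f4])
      then show ?thesis using parity5[of "A u v" "A u' v" "r v" "r v'" \<sigma>] unfolding v'_def by simp
    qed
    have "even (\<Sum>v<n. (of_bool (A u v) + of_bool (A u' v) + of_bool (r v) + of_bool (r (Suc v mod n)) + of_bool \<sigma> :: nat))"
      by (rule dvd_sum) (use T in auto)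
    moreover have "(\<Sum>v<n. (of_bool (A u v) + of_bool (A u' v) + of_bool (r v) + of_bool (r (Suc v mod n)) + of_bool \<sigma> :: nat))
        = S u + S u' + 2 * (\<Sum>v<n. of_bool (r v)) + n * of_bool \<sigma>"
      using sum_shift_mod[of n "\<lambda>v. of_bool (r v)"] n by (simp add: S_def sum.distrib)
    ultimately have "even (S u + S u' + n * of_bool \<sigma>)" by simp
    then show ?thesis unfolding u'_def[symmetric] \<sigma>_def using n by (cases "u = 0") auto
  qed
  show False
    by (rule cyc_contra[of q "\<lambda>u. even (S u)"]) (use q step in auto)
qed



lemma all4: "(\<forall>\<alpha>::nat<4. Z \<alpha>) = (Z 0 \<and> Z 1 \<and> Z 2 \<and> Z 3)"
proof
  assume "Z 0 \<and> Z 1 \<and> Z 2 \<and> Z 3"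
  moreover have "\<alpha> < 4 \<Longrightarrow> \<alpha> = 0 \<or> \<alpha> = 1 \<or> \<alpha> = 2 \<or> \<alpha> = 3" for \<alpha> :: nat by arith
  ultimately show "\<forall>\<alpha>::nat<4. Z \<alpha>" by auto
qed auto

definition th4 :: "bool \<Rightarrow> bool \<Rightarrow> bool \<Rightarrow> bool \<Rightarrow> nat \<Rightarrow> bool" where
  "th4 b0 b1 b2 b3 \<alpha> = (if \<alpha> = 0 then b0 else if \<alpha> = 1 then b1 else if \<alpha> = 2 then b2 else b3)"

lemma classify:
  fixes P :: "nat \<Rightarrow> nat \<Rightarrow> bool"
  assumes sym: "\<And>\<alpha> \<beta>. P \<alpha> \<beta> = P \<beta> \<alpha>"
  shows "\<exists>\<theta>. form4 (\<lambda>\<alpha> \<beta>. (P \<alpha> \<beta> \<noteq> \<theta> \<alpha>) \<noteq> \<theta> \<beta>)"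
proof -
  define t0 where "t0 = P 0 3"
  define t1 where "t1 = P 1 3"
  define t2 where "t2 = P 2 3"
  have s: "P 1 0 = P 0 1" "P 2 0 = P 0 2" "P 3 0 = P 0 3" "P 2 1 = P 1 2" "P 3 1 = P 1 3" "P 3 2 = P 2 3"
    using sym by auto
  define q01 where "q01 = ((P 0 1 \<noteq> t0) \<noteq> t1)"
  define q02 where "q02 = ((P 0 2 \<noteq> t0) \<noteq> t2)"
  define q12 where "q12 = ((P 1 2 \<noteq> t1) \<noteq> t2)"
  note defs = form4_def all4 th4_def sym t0_def t1_def t2_def doubleton_eq_iff
  show ?thesis
  proof (cases q01; cases q02; cases q12)
    assume "q01" "q02" "q12"
    then show ?thesis using q01_def q02_def q12_def
      by (intro exI[of _ "th4 t0 t1 t2 True"]) (unfold form4_def, rule disjI2, rule disjI1, auto simp: defs)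
  next
    assume "q01" "q02" "\<not>q12"
    then show ?thesis using q01_def q02_def q12_def
      by (intro exI[of _ "th4 (\<not>t0) t1 t2 False"]) (unfold form4_def, intro disjI2 exI[of _ 0] exI[of _ 3], auto simp: defs)
  next
    assume "q01" "\<not>q02" "q12"
    then show ?thesis using q01_def q02_def q12_def
      by (intro exI[of _ "th4 t0 (\<not>t1) t2 False"]) (unfold form4_def, intro disjI2 exI[of _ 1] exI[of _ 3], auto simp: defs)
  next
    assume "q01" "\<not>q02" "\<not>q12"
    then show ?thesis using q01_def q02_def q12_def
      by (intro exI[of _ "th4 t0 t1 t2 False"]) (unfold form4_def, intro disjI2 exI[of _ 0] exI[of _ 1], auto simp: defs)
  next
    assume "\<not>q01" "q02" "q12"
    then show ?thesis using q01_def q02_def q12_def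
      by (intro exI[of _ "th4 t0 t1 (\<not>t2) False"]) (unfold form4_def, intro disjI2 exI[of _ 2] exI[of _ 3], auto simp: defs)
  next
    assume "\<not>q01" "q02" "\<not>q12"
    then show ?thesis using q01_def q02_def q12_def
      by (intro exI[of _ "th4 t0 t1 t2 False"]) (unfold form4_def, intro disjI2 exI[of _ 0] exI[of _ 2], auto simp: defs)
  next
    assume "\<not>q01" "\<not>q02" "q12"
    then show ?thesis using q01_def q02_def q12_def
      by (intro exI[of _ "th4 t0 t1 t2 False"]) (unfold form4_def, intro disjI2 exI[of _ 1] exI[of _ 2], auto simp: defs)
  next
    assume "\<not>q01" "\<not>q02" "\<not>q12"
    then show ?thesis using q01_def q02_def q12_def
      by (intro exI[of _ "th4 t0 t1 t2 False"]) (unfold form4_def, rule disjI1, auto simp: defs)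
  qed
qed



lemma cycE_props:
  assumes "{v1,v2} \<in> cyc_E k" "k \<ge> 2"
  shows "v1 < k \<and> v2 < k \<and> v1 \<noteq> v2"
proof -
  obtain i where i: "i < k" "{v1,v2} = {i, Suc i mod k}" using assms(1) unfolding cyc_E_def by blast
  have m: "Suc i mod k < k" using assms(2) by simp
  have ne: "i \<noteq> Suc i mod k"
  proof (cases "Suc i < k")
    case True then show ?thesis by simp
  next
    case False
    then have "Suc i = k" using i by simp
    then show ?thesis using assms(2) by auto
  qed
  show ?thesis using i m ne unfolding doubleton_eq_iff by auto
qed

lemma E_pair: "e \<in> prod_E A B C D \<Longrightarrow> \<exists>a b. e = {a,b}"
  unfolding prod_E_def by blast

lemma E_props:
  assumes "{a,b} \<in> prod_E (cyc_V q) (cyc_E q) (cyc_V n) (cyc_E n)" "q \<ge> 2" "n \<ge> 2"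
  shows "a \<in> prod_V (cyc_V q) (cyc_V n) \<and> b \<in> prod_V (cyc_V q) (cyc_V n) \<and> a \<noteq> b"
  using assms(1) unfolding prod_E_def
proof (elim UnE CollectE exE conjE)
  fix u v1 v2 assume h: "{a, b} = {(u, v1), (u, v2)}" "u \<in> cyc_V q" "{v1, v2} \<in> cyc_E n"
  have "v1 < n \<and> v2 < n \<and> v1 \<noteq> v2" using cycE_props[OF h(3) assms(3)] .
  then show ?thesis using h(1,2) unfolding doubleton_eq_iff prod_V_def cyc_V_def by auto
next
  fix u1 u2 v assume h: "{a, b} = {(u1, v), (u2, v)}" "v \<in> cyc_V n" "{u1, u2} \<in> cyc_E q"
  have "u1 < q \<and> u2 < q \<and> u1 \<noteq> u2" using cycE_props[OF h(3) assms(2)] .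
  then show ?thesis using h(1,2) unfolding doubleton_eq_iff prod_V_def cyc_V_def by auto
qed

lemma row_edge:
  assumes "u < q" "v < n"
  shows "{(u,v),(u,Suc v mod n)} \<in> prod_E (cyc_V q) (cyc_E q) (cyc_V n) (cyc_E n)"
  unfolding prod_E_def cyc_V_def cyc_E_def using assms by blast

lemma col_edge:
  assumes "u < q" "v < n"
  shows "{(u,v),(Suc u mod q,v)} \<in> prod_E (cyc_V q) (cyc_E q) (cyc_V n) (cyc_E n)"
  unfolding prod_E_def cyc_V_def cyc_E_def using assms by blast

lemma sig_row: "prod_sig UC_sig BC_sig {(u,v),(u,w)} = False"
  unfolding prod_sig_def BC_sig_def by simp

lemma sig_col: "u \<noteq> u' \<Longrightarrow> prod_sig UC_sig BC_sig {(u,v),(u',v)} = UC_sig {u,u'}"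
  unfolding prod_sig_def by simp

lemma uc0: assumes "u < q" "q \<ge> 3" shows "UC_sig {u, Suc u mod q} = (u = 0)"
proof (cases "u = 0")
  case True then show ?thesis using assms unfolding UC_sig_def by simp
next
  case False
  show ?thesis
  proof (cases "u = 1")
    case True
    then have "Suc u mod q = 2" using assms by simp
    then show ?thesis using True unfolding UC_sig_def doubleton_eq_iff by simp
  next
    case False
    then show ?thesis using \<open>u \<noteq> 0\<close> unfolding UC_sig_def doubleton_eq_iff by auto
  qed
qed



theorem lemma6p1:
  fixes p q :: nat
  assumes "p \<ge> 1" and "q \<ge> 3"
  shows "signed_chi (prod_V (cyc_V q) (cyc_V (2*p+1)))
                    (prod_E (cyc_V q) (cyc_E q) (cyc_V (2*p+1)) (cyc_E (2*p+1)))
                    (prod_sig UC_sig BC_sig) > 4"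
proof -
  define n where "n = 2*p+1"
  have n2: "n \<ge> 2" and q2: "q \<ge> 2" using assms unfolding n_def by auto
  define V where "V = prod_V (cyc_V q) (cyc_V n)"
  define E where "E = prod_E (cyc_V q) (cyc_E q) (cyc_V n) (cyc_E n)"
  define \<sigma> where "\<sigma> = prod_sig UC_sig BC_sig"
  define Pk where "Pk k = (\<exists>(W::nat set) F pi phi. signed_graph W F pi \<and> card W = k \<and> signed_hom V E \<sigma> W F pi phi)" for k
  have Eprops: "\<And>a b. {a,b} \<in> E \<Longrightarrow> a \<in> V \<and> b \<in> V \<and> a \<noteq> b"
    unfolding E_def V_def using E_props q2 n2 by blast
  have finV: "finite V" unfolding V_def prod_V_def cyc_V_def by simp
  have ex: "\<exists>k. Pk k"
  proof -
    obtain \<iota> :: "nat \<times> nat \<Rightarrow> nat" and m where im: "\<iota> ` V = {i. i < m}" "inj_on \<iota> V"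
      using finite_imp_inj_to_nat_seg[OF finV] by blast
    define W where "W = \<iota> ` V"
    define F where "F = (\<lambda>e. \<iota> ` e) ` E"
    define pi where "pi e' = \<sigma> (inv_into V \<iota> ` e')" for e'
    have sg: "signed_graph W F pi"
      unfolding signed_graph_def
    proof
      show "finite W" unfolding W_def using finV by simp
      show "\<forall>e\<in>F. \<exists>u v. u \<in> W \<and> v \<in> W \<and> u \<noteq> v \<and> e = {u, v}"
      proof
        fix e' assume "e' \<in> F"
        then obtain e where e: "e \<in> E" "e' = \<iota> ` e" unfolding F_def by blast
        then obtain a b where ab: "e = {a,b}" using E_pair unfolding E_def by blast
        have "a \<in> V \<and> b \<in> V \<and> a \<noteq> b" using Eprops e(1) ab by blast
        then have "\<iota> a \<in> W \<and> \<iota> b \<in> W \<and> \<iota> a \<noteq> \<iota> b \<and> e' = {\<iota> a, \<iota> b}"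
          using inj_on_eq_iff[OF im(2)] e(2) ab unfolding W_def by simp
        then show "\<exists>u v. u \<in> W \<and> v \<in> W \<and> u \<noteq> v \<and> e' = {u, v}" by blast
      qed
    qed
    have sh: "signed_hom V E \<sigma> W F pi \<iota>"
      unfolding signed_hom_def
    proof (intro conjI exI[of _ "{}"])
      show "\<forall>v\<in>V. \<iota> v \<in> W" unfolding W_def by blast
      show "{} \<subseteq> V" by simp
      show "\<forall>u v. {u, v} \<in> E \<longrightarrow> {\<iota> u, \<iota> v} \<in> F \<and> pi {\<iota> u, \<iota> v} = (\<sigma> {u, v} \<noteq> ((u \<in> {}) \<noteq> (v \<in> {})))"
      proof (intro allI impI conjI)
        fix u v assume uv: "{u,v} \<in> E"
        then have uvV: "u \<in> V" "v \<in> V" using Eprops by auto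
        have "{\<iota> u, \<iota> v} = \<iota> ` {u,v}" by simp
        then show "{\<iota> u, \<iota> v} \<in> F" unfolding F_def using uv by (rule image_eqI)
        have "inv_into V \<iota> ` {\<iota> u, \<iota> v} = {u, v}" using uvV im(2) by simp
        then show "pi {\<iota> u, \<iota> v} = (\<sigma> {u, v} \<noteq> ((u \<in> {}) \<noteq> (v \<in> {})))" unfolding pi_def by simp
      qed
    qed
    show ?thesis unfolding Pk_def using sg sh by blast
  qed
  have bound: "4 < k" if Pkk: "Pk k" for k
  proof (rule ccontr)
    assume "\<not> 4 < k"
    then have k4: "k \<le> 4" by simp
    obtain W :: "nat set" and F pi phi where sg: "signed_graph W F pi" and cW: "card W = k"
      and sh: "signed_hom V E \<sigma> W F pi phi" using Pkk unfolding Pk_def by blast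
    have finW: "finite W" using sg unfolding signed_graph_def by blast
    obtain \<iota> :: "nat \<Rightarrow> nat" and m where im: "\<iota> ` W = {i. i < m}" "inj_on \<iota> W"
      using finite_imp_inj_to_nat_seg[OF finW] by blast
    have "m = card W" using card_image[OF im(2)] im(1) by simp
    then have m4: "m \<le> 4" using cW k4 by simp
    have phiW: "\<forall>v\<in>V. phi v \<in> W" using sh unfolding signed_hom_def by blast
    obtain X where X: "\<forall>u v. {u, v} \<in> E \<longrightarrow> {phi u, phi v} \<in> F \<and> pi {phi u, phi v} = (\<sigma> {u, v} \<noteq> ((u \<in> X) \<noteq> (v \<in> X)))"
      using sh unfolding signed_hom_def by blast
    define P where "P \<alpha> \<beta> = pi {inv_into W \<iota> \<alpha>, inv_into W \<iota> \<beta>}" for \<alpha> \<beta>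
    have Psym: "\<And>\<alpha> \<beta>. P \<alpha> \<beta> = P \<beta> \<alpha>" unfolding P_def by (simp add: insert_commute)
    have edge: "\<iota> (phi a) \<noteq> \<iota> (phi b) \<and> P (\<iota> (phi a)) (\<iota> (phi b)) = (\<sigma> {a,b} \<noteq> ((a \<in> X) \<noteq> (b \<in> X)))"
      if ab: "{a,b} \<in> E" for a b
    proof -
      have abV: "a \<in> V" "b \<in> V" using Eprops[OF ab] by auto
      have pW: "phi a \<in> W" "phi b \<in> W" using phiW abV by auto
      have inF: "{phi a, phi b} \<in> F" and sgn: "pi {phi a, phi b} = (\<sigma> {a, b} \<noteq> ((a \<in> X) \<noteq> (b \<in> X)))"
        using X[rule_format, OF ab] by auto
      obtain u' v' where "u' \<noteq> v'" "{phi a, phi b} = {u', v'}" using sg inF unfolding signed_graph_def by blast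
      then have ne: "phi a \<noteq> phi b" unfolding doubleton_eq_iff by auto
      have "\<iota> (phi a) \<noteq> \<iota> (phi b)" using ne pW im(2) unfolding inj_on_def by blast
      moreover have "P (\<iota> (phi a)) (\<iota> (phi b)) = pi {phi a, phi b}"
        unfolding P_def using pW im(2) by simp
      ultimately show ?thesis using sgn by simp
    qed
    define c where "c u v = \<iota> (phi (u,v))" for u v
    define x where "x u v = ((u,v) \<in> X)" for u v
    have cb: "\<forall>u<q. \<forall>v<n. c u v < 4"
    proof (intro allI impI)
      fix u v assume "u < q" "v < n"
      then have "(u,v) \<in> V" unfolding V_def prod_V_def cyc_V_def by simp
      then have "c u v \<in> \<iota> ` W" unfolding c_def using phiW by blast
      then show "c u v < 4" using im(1) m4 by auto
    qed
    have R1: "\<forall>u<q. \<forall>v<n. c u v \<noteq> c u (Suc v mod n) \<and> P (c u v) (c u (Suc v mod n)) = (x u v \<noteq> x u (Suc v mod n))"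
    proof (intro allI impI)
      fix u v assume uv: "u < q" "v < n"
      have "{(u,v),(u,Suc v mod n)} \<in> E" unfolding E_def by (rule row_edge[OF uv])
      from edge[OF this] show "c u v \<noteq> c u (Suc v mod n) \<and> P (c u v) (c u (Suc v mod n)) = (x u v \<noteq> x u (Suc v mod n))"
        unfolding c_def x_def \<sigma>_def sig_row by simp
    qed
    have R2: "\<forall>u<q. \<forall>v<n. c u v \<noteq> c (Suc u mod q) v \<and> P (c u v) (c (Suc u mod q) v) = ((u=0) \<noteq> (x u v \<noteq> x (Suc u mod q) v))"
    proof (intro allI impI)
      fix u v assume uv: "u < q" "v < n"
      have "{(u,v),(Suc u mod q,v)} \<in> E" unfolding E_def by (rule col_edge[OF uv])
      moreover have "u \<noteq> Suc u mod q"
      proof (cases "Suc u < q")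
        case True then show ?thesis by simp
      next
        case False
        then have "Suc u = q" using uv by simp
        then show ?thesis using q2 by auto
      qed
      moreover have "UC_sig {u, Suc u mod q} = (u = 0)" using uc0 uv assms(2) by blast
      ultimately show "c u v \<noteq> c (Suc u mod q) v \<and> P (c u v) (c (Suc u mod q) v) = ((u=0) \<noteq> (x u v \<noteq> x (Suc u mod q) v))"
        using edge unfolding c_def x_def \<sigma>_def by (simp add: sig_col)
    qed
    obtain \<theta> where th: "form4 (\<lambda>\<alpha> \<beta>. (P \<alpha> \<beta> \<noteq> \<theta> \<alpha>) \<noteq> \<theta> \<beta>)" using classify[of P, OF Psym] by blast
    define x' where "x' u v = (x u v \<noteq> \<theta> (c u v))" for u v
    show False
    proof (rule core[OF n_def assms(1) assms(2) cb _ _ th, of x'])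
      show "\<forall>u<q. \<forall>v<n. c u v \<noteq> c u (Suc v mod n) \<and> ((P (c u v) (c u (Suc v mod n)) \<noteq> \<theta> (c u v)) \<noteq> \<theta> (c u (Suc v mod n))) = (x' u v \<noteq> x' u (Suc v mod n))"
      proof (intro allI impI)
        fix u v assume uv: "u < q" "v < n"
        note h = R1[rule_format, OF uv]
        show "c u v \<noteq> c u (Suc v mod n) \<and> ((P (c u v) (c u (Suc v mod n)) \<noteq> \<theta> (c u v)) \<noteq> \<theta> (c u (Suc v mod n))) = (x' u v \<noteq> x' u (Suc v mod n))"
          using h unfolding x'_def
          by (cases "x u v"; cases "x u (Suc v mod n)"; cases "\<theta> (c u v)"; cases "\<theta> (c u (Suc v mod n))"; simp)
      qed
      show "\<forall>u<q. \<forall>v<n. c u v \<noteq> c (Suc u mod q) v \<and> ((P (c u v) (c (Suc u mod q) v) \<noteq> \<theta> (c u v)) \<noteq> \<theta> (c (Suc u mod q) v)) = ((u=0) \<noteq> (x' u v \<noteq> x' (Suc u mod q) v))"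
      proof (intro allI impI)
        fix u v assume uv: "u < q" "v < n"
        note h = R2[rule_format, OF uv]
        show "c u v \<noteq> c (Suc u mod q) v \<and> ((P (c u v) (c (Suc u mod q) v) \<noteq> \<theta> (c u v)) \<noteq> \<theta> (c (Suc u mod q) v)) = ((u=0) \<noteq> (x' u v \<noteq> x' (Suc u mod q) v))"
          using h unfolding x'_def
          by (cases "x u v"; cases "x (Suc u mod q) v"; cases "\<theta> (c u v)"; cases "\<theta> (c (Suc u mod q) v)"; cases "u = 0"; simp)
      qed
    qed
  qed
  have "signed_chi V E \<sigma> = (LEAST k. Pk k)" unfolding signed_chi_def Pk_def by simp
  moreover have "4 < (LEAST k. Pk k)" by (rule LeastI2_ex[OF ex bound])
  ultimately show ?thesis unfolding V_def E_def \<sigma>_def n_def by simp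
qed

end
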